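(* Let $n$ be a positive even integer and $m$ a positive integer. Then $$\sum_{k=1}^\infty\frac{F_n^{2k}5^k\binom{2k}{2m}}{L_n^{2k}(2k-1)(2k)(2k+1)}=\frac{L_n}{4F_n}\sum_{j=0}^{m-1}\frac{5^{m-j}}{2m-2j}\frac{F_n^{2m-2j}}{2^{2m-2j}}F_{n(2m-2j)}-\frac{L_n}{4F_n}\sum_{j=1}^{m}\frac{5^{m-j}}{2m-2j+1}\frac{F_n^{2m-2j+1}}{2^{2m-2j+1}}L_{n(2m-2j+1)}$$ $$-\frac{5^m}{m}\frac{F_n^{2m}}{2^{2m+2}}L_{2nm}+\frac1{L_n}\frac{5^{m+1}}{m}\frac{F_n^{2m+1}}{2^{2m+3}}F_{2nm}+\frac1{L_n}\frac{5^m}{2m-1}\frac{F_n^{2m}}{2^{2m+1}}L_{n(2m-1)}+\frac{nL_n}{2F_n\sqrt5}\ln\alpha,$$ and $$\sum_{k=1}^\infty\frac{F_n^{2k}5^k\binom{2k}{2m+1}}{L_n^{2k}(2k-1)(2k)(2k+1)}=\frac{L_n}{4F_n}\sum_{j=0}^{m}\frac{5^{m-j}}{2m-2j+1}\frac{F_n^{2m-2j+1}}{2^{2m-2j+1}}L_{n(2m-2j+1)}-\frac{L_n}{4F_n}\sum_{j=1}^{m}\frac{5^{m-j+1}}{2m-2j+2}\frac{F_n^{2m-2j+2}}{2^{2m-2j+2}}F_{n(2m-2j+2)}$$ $$-\frac{5^{m+1}}{2m+1}\frac{F_n^{2m+1}}{2^{2m+2}}F_{n(2m+1)}+\frac1{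L_n}\frac{5^{m+1}}{2m+1}\frac{F_n^{2m+2}}{2^{2m+3}}L_{n(2m+1)}+\frac1{L_n}\frac{5^{m+1}}{m}\frac{F_n^{2m+1}}{2^{2m+3}}F_{2mn}-\frac{nL_n}{2F_n\sqrt5}\ln\alpha.$$
   Context: $F_n=(\alpha^n-\beta^n)/(\alpha-\beta)$ and $L_n=\alpha^n+\beta^n$ are the Fibonacci and Lucas numbers, with $\alpha=(1+\sqrt5)/2$, $\beta=(1-\sqrt5)/2$. *)

theory Defs
  imports Complex_Main
begin

definition alpha :: real where "alpha = (1 + sqrt 5) / 2"
definition beta :: real where "beta = (1 - sqrt 5) / 2"

definition fibr :: "nat \<Rightarrow> real" where "fibr n = (alpha ^ n - beta ^ n) / (alpha - beta)"
definition lucas :: "nat \<Rightarrow> real" where "lucas n = alpha ^ n + beta ^ n"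

end

theory Submission
  imports Defs "HOL-Analysis.Analysis"
begin


definition E :: "nat \<Rightarrow> real \<Rightarrow> real" where "E r y = y^r / (1-y)^(r+1)"

lemma E_sums: "\<bar>y\<bar> < 1 \<Longrightarrow> (\<lambda>N. real (N choose r) * y^N) sums E r y"
proof (induction r arbitrary: y)
  case 0
  then show ?case using geometric_sums[of y] by (simp add: E_def)
next
  case (Suc r)
  have ay: "\<bar>\<bar>y\<bar>\<bar> < 1" using Suc.prems by simp
  have s1: "summable (\<lambda>k. norm (y^k))"
    using summable_geometric[of "\<bar>y\<bar>"] ay by (simp add: power_abs)
  have s2: "summable (\<lambda>k. norm (real (k choose r) * y^k))"
    using sums_summable[OF Suc.IH[OF ay]] by (simp add: abs_mult power_abs)
  have c: "(\<lambda>k. \<Sum>i\<le>k. y^i * (real ((k-i) choose r) * y^(k-i))) sums ((\<Sum>k. y^k) * (\<Sum>k. real (k choose r) * y^k))"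
    by (rule Cauchy_product_sums[OF s1 s2])
  have e1: "(\<Sum>i\<le>k. y^i * (real ((k-i) choose r) * y^(k-i))) = real (Suc k choose Suc r) * y^k" for k
  proof -
    have "(\<Sum>i\<le>k. y^i * (real ((k-i) choose r) * y^(k-i))) = (\<Sum>i\<le>k. y^k * real ((k-i) choose r))"
      by (rule sum.cong) (auto simp: power_add[symmetric])
    also have "\<dots> = y^k * (\<Sum>i\<le>k. real ((k-i) choose r))" by (simp add: sum_distrib_left)
    also have "(\<Sum>i\<le>k. real ((k-i) choose r)) = (\<Sum>i\<le>k. real (i choose r))"
      using sum.atLeastAtMost_rev[of "\<lambda>i. real (i choose r)" 0 k] by (simp add: atMost_atLeast0)
    also have "\<dots> = real (Suc k choose Suc r)"
      by (simp only: of_nat_sum[symmetric] sum_choose_upper)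
    finally show ?thesis by simp
  qed
  have g: "(\<Sum>k. y^k) = 1/(1-y)" using suminf_geometric[of y] Suc.prems by simp
  have h: "(\<Sum>k. real (k choose r) * y^k) = E r y" using Suc.IH[OF Suc.prems] sums_unique by metis
  have "(\<lambda>k. real (Suc k choose Suc r) * y^k) sums (1/(1-y) * E r y)"
    using c unfolding e1 g h .
  then have "(\<lambda>k. y * (real (Suc k choose Suc r) * y^k)) sums (y * (1/(1-y) * E r y))"
    by (rule sums_mult)
  then have "(\<lambda>k. real (Suc k choose Suc r) * y^(Suc k)) sums (E (Suc r) y)"
    using Suc.prems by (simp add: E_def field_simps)
  then show ?case using sums_Suc_iff[of "\<lambda>N. real (N choose Suc r) * y^N"] by simp
qed

definition Pc :: "nat \<Rightarrow> real \<Rightarrow> real" where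
  "Pc r y = (-1)^(r+1) * ln (1-y) / y + (1/y) * (\<Sum>j=1..r. (-1)^(r-j) / real j * (y/(1-y))^j)"

lemma P0_sums:
  assumes "\<bar>y\<bar> < 1" "y \<noteq> 0"
  shows "(\<lambda>N. y^N / real (N+1)) sums (- ln (1-y) / y)"
proof -
  have "(\<lambda>n. - ((-(-y))^n) / of_nat n) sums ln (1 + (-y))"
    by (rule ln_series') (use assms in simp)
  then have "(\<lambda>n. - (y^n) / real n) sums ln (1 - y)" by simp
  then have "(\<lambda>n. - (y^(Suc n)) / real (Suc n)) sums ln (1 - y)"
    using sums_Suc_iff[of "\<lambda>n. - (y^n) / real n"] by simp
  then have "(\<lambda>n. (-1/y) * (- (y^(Suc n)) / real (Suc n))) sums ((-1/y) * ln (1 - y))"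
    by (rule sums_mult)
  then show ?thesis using assms by (simp add: field_simps)
qed

lemma aux1:
  fixes a b z M r :: real
  assumes "b * (r + 1) = a * (M + 1) - a * (r + 1)" "r + 1 > 0" "M + 1 > 0"
  shows "b * z / (M + 1) = a * z / (r + 1) - a * z / (M + 1)"
proof -
  have "b = a * (M - r) / (r + 1)" using assms by (simp add: field_simps)
  then have "b * z / (M + 1) = a * z * (M - r) / ((r + 1) * (M + 1))" by simp
  also have "\<dots> = a * z * ((M + 1) - (r + 1)) / ((r + 1) * (M + 1))" by simp
  also have "\<dots> = a * z * (M + 1) / ((r + 1) * (M + 1)) - a * z * (r + 1) / ((r + 1) * (M + 1))"
    by (simp only: right_diff_distrib diff_divide_distrib)
  also have "\<dots> = a * z / (r + 1) - a * z / (M + 1)" using assms by simp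
  finally show ?thesis .
qed

lemma P_sums:
  assumes "\<bar>y\<bar> < 1" "y \<noteq> 0"
  shows "(\<lambda>N. real (N choose r) * y^N / real (N+1)) sums Pc r y"
proof (induction r)
  case 0
  then show ?case using P0_sums[OF assms] by (simp add: Pc_def)
next
  case (Suc r)
  have t: "real (N choose Suc r) * y^N / real (N+1) = real (N choose r) * y^N / real (Suc r) - real (N choose r) * y^N / real (N+1)" for N
  proof -
    have "real (Suc N choose Suc r) * real (Suc r) = real (Suc N) * real (N choose r)"
      using Suc_times_binomial_eq[of N r] by (metis of_nat_mult mult.commute)
    then have h: "real (N choose Suc r) * (real r + 1) = real (N choose r) * (real N + 1) - real (N choose r) * (real r + 1)"
      by (simp add: algebra_simps)
    show ?thesis using aux1[OF h, of "y^N"] by (simp add: add.commute)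
  qed
  have "(\<lambda>N. real (N choose r) * y^N / real (Suc r) - real (N choose r) * y^N / real (N+1)) sums (E r y / real (Suc r) - Pc r y)"
    by (intro sums_diff sums_divide E_sums Suc.IH) (use assms in simp)
  moreover have "E r y / real (Suc r) - Pc r y = Pc (Suc r) y"
  proof -
    have "(\<Sum>j=1..Suc r. (-1)^(Suc r-j) / real j * (y/(1-y))^j)
        = (\<Sum>j=1..r. (-1)^(Suc r-j) / real j * (y/(1-y))^j) + (y/(1-y))^(Suc r) / real (Suc r)"
      by simp
    also have "(\<Sum>j=1..r. (-1)^(Suc r-j) / real j * (y/(1-y))^j) = - (\<Sum>j=1..r. (-1)^(r-j) / real j * (y/(1-y))^j)"
      by (subst sum_negf[symmetric], rule sum.cong) (auto simp: Suc_diff_le)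
    finally have "(\<Sum>j=1..Suc r. (-1)^(Suc r-j) / real j * (y/(1-y))^j) = - (\<Sum>j=1..r. (-1)^(r-j) / real j * (y/(1-y))^j) + (y/(1-y))^(Suc r) / real (Suc r)" .
    moreover have "1 - y \<noteq> 0" using assms by auto
    ultimately show ?thesis using assms unfolding Pc_def E_def
      by (simp add: field_simps power_divide)
  qed
  ultimately show ?case using t by simp
qed

definition G :: "nat \<Rightarrow> real \<Rightarrow> real" where
  "G r y = 1/2 * (y^2 * (E (r-1) y / real r + E (r-2) y / real (r-1))) - y * E (r-1) y / real r + 1/2 * Pc r y"

lemma pf3:
  fixes X :: real
  shows "X / (real (N+1) * real (N+2) * real (N+3)) = 1/2 * (X / real (N+1)) - X / real (N+2) + 1/2 * (X / real (N+3))"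
proof -
  define a where "a = real N + 1"
  have a: "a > 0" unfolding a_def by simp
  define b where "b = a + 1"
  define c where "c = a + 2"
  have bc: "b \<noteq> 0" "c \<noteq> 0" "a \<noteq> 0" using a unfolding b_def c_def by auto
  have b: "real (N+2) = b" "real (N+3) = c" "real (N+1) = a" unfolding a_def b_def c_def by simp_all
  have "1/2 * (X / a) - X / b + 1/2 * (X / c) = X * (b*c - 2*a*c + a*b) / (2*a*b*c)"
    using bc by (simp add: field_simps)
  also have "b*c - 2*a*c + a*b = 2" unfolding b_def c_def by (simp add: algebra_simps)
  finally show ?thesis unfolding b by simp
qed

lemma G_sums:
  assumes "\<bar>y\<bar> < 1" "y \<noteq> 0" "r \<ge> 2"
  shows "(\<lambda>N. real ((N+2) choose r) * y^(N+2) / (real (N+1) * real (N+2) * real (N+3))) sums G r y"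
proof -
  obtain s where r: "r = s + 2" using assms(3) by (metis le_add_diff_inverse2)
  have ta: "real ((N+2) choose (s+2)) * y^(N+2) / real (N+1) = y^2 * (real (N choose (s+1)) * y^N / real (s+2) + real (N choose s) * y^N / real (s+1))" for N
  proof -
    have h1: "real (s+2) * real (Suc N choose (s+2)) = real (Suc N) * real (N choose (s+1))"
      using Suc_times_binomial[of "s+1" N] by (metis of_nat_mult add_2_eq_Suc' add.commute Suc_eq_plus1)
    have h2: "real (s+1) * real (Suc N choose (s+1)) = real (Suc N) * real (N choose s)"
      using Suc_times_binomial[of s N] by (metis of_nat_mult Suc_eq_plus1)
    have e: "real ((N+2) choose (s+2)) = real (Suc N choose (s+1)) + real (Suc N choose (s+2))"
      by (simp add: numeral_2_eq_2)
    have a1: "real (Suc N choose (s+1)) = real (Suc N) * real (N choose s) / real (s+1)"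
      using h2 by (simp add: field_simps)
    have a2: "real (Suc N choose (s+2)) = real (Suc N) * real (N choose (s+1)) / real (s+2)"
      using h1 by (simp add: field_simps)
    have "real ((N+2) choose (s+2)) = real (Suc N) * (real (N choose s) / real (s+1) + real (N choose (s+1)) / real (s+2))"
      unfolding e a1 a2 by (simp add: algebra_simps)
    then have "real ((N+2) choose (s+2)) * y^(N+2) / real (N+1) = (real (N choose s) / real (s+1) + real (N choose (s+1)) / real (s+2)) * y^(N+2)"
      by simp
    then show ?thesis by (simp add: algebra_simps power_add power2_eq_square)
  qed
  have tb: "real ((N+2) choose (s+2)) * y^(N+2) / real (N+2) = y * (real (Suc N choose (s+1)) * y^(Suc N)) / real (s+2)" for N
  proof -
    have h1: "real (s+2) * real (Suc (Suc N) choose (s+2)) = real (Suc (Suc N)) * real (Suc N choose (s+1))"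
      using Suc_times_binomial[of "s+1" "Suc N"] by (metis of_nat_mult add_2_eq_Suc' add.commute Suc_eq_plus1)
    then have "real ((N+2) choose (s+2)) = real (N+2) * (real (Suc N choose (s+1)) / real (s+2))"
      by (simp add: field_simps numeral_2_eq_2)
    then have "real ((N+2) choose (s+2)) * y^(N+2) / real (N+2) = (real (Suc N choose (s+1)) / real (s+2)) * y^(N+2)"
      by (simp del: of_nat_add)
    then show ?thesis by (simp add: algebra_simps power_add numeral_2_eq_2)
  qed
  have sa: "(\<lambda>N. real ((N+2) choose (s+2)) * y^(N+2) / real (N+1)) sums (y^2 * (E (s+1) y / real (s+2) + E s y / real (s+1)))"
    unfolding ta by (intro sums_mult sums_add sums_divide E_sums) (use assms in auto)
  have "(\<lambda>N. real (Suc N choose (s+1)) * y^(Suc N)) sums E (s+1) y"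
    using sums_Suc_iff[of "\<lambda>N. real (N choose (s+1)) * y^N"] E_sums[OF assms(1)] by simp
  then have sb: "(\<lambda>N. real ((N+2) choose (s+2)) * y^(N+2) / real (N+2)) sums (y * E (s+1) y / real (s+2))"
    unfolding tb by (intro sums_mult sums_divide)
  define f where "f N = real (N choose (s+2)) * y^N / real (N+1)" for N
  have f0: "f 0 = 0" "f (Suc 0) = 0" unfolding f_def by simp_all
  have "f sums Pc (s+2) y" unfolding f_def using P_sums[OF assms(1,2)] .
  then have "(\<lambda>N. f (Suc N)) sums Pc (s+2) y" using sums_Suc_iff[of f] f0 by simp
  then have "(\<lambda>N. f (Suc (Suc N))) sums Pc (s+2) y" using sums_Suc_iff[of "\<lambda>N. f (Suc N)"] f0 by simp
  moreover have "f (Suc (Suc N)) = real ((N+2) choose (s+2)) * y^(N+2) / real (N+3)" for N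
    unfolding f_def by (simp add: numeral_2_eq_2 numeral_3_eq_3)
  ultimately have sc: "(\<lambda>N. real ((N+2) choose (s+2)) * y^(N+2) / real (N+3)) sums Pc (s+2) y"
    by simp
  have "(\<lambda>N. 1/2 * (real ((N+2) choose (s+2)) * y^(N+2) / real (N+1)) - real ((N+2) choose (s+2)) * y^(N+2) / real (N+2)
       + 1/2 * (real ((N+2) choose (s+2)) * y^(N+2) / real (N+3))) sums
      (1/2 * (y^2 * (E (s+1) y / real (s+2) + E s y / real (s+1))) - y * E (s+1) y / real (s+2) + 1/2 * Pc (s+2) y)"
    by (intro sums_add sums_diff sums_mult sa sb sc)
  then show ?thesis unfolding r G_def pf3[symmetric] by (simp add: add.commute)
qed

lemma even_sums:
  assumes "\<bar>y\<bar> < 1" "y \<noteq> 0" "r \<ge> 2"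
  shows "(\<lambda>i. real ((2*i+2) choose r) * y^(2*i+2) / (real (2*i+1) * real (2*i+2) * real (2*i+3))) sums ((G r y + G r (-y)) / 2)"
proof -
  define g where "g z N = real ((N+2) choose r) * z^(N+2) / (real (N+1) * real (N+2) * real (N+3))" for z :: real and N
  have "(\<lambda>N. (g y N + g (-y) N) / 2) sums ((G r y + G r (-y)) / 2)"
    unfolding g_def by (intro sums_divide sums_add G_sums) (use assms in auto)
  then have "(\<lambda>i. \<Sum>N\<in>{i*2..<i*2+2}. (g y N + g (-y) N) / 2) sums ((G r y + G r (-y)) / 2)"
    by (rule sums_group) simp
  moreover have "(\<Sum>N\<in>{i*2..<i*2+2}. (g y N + g (-y) N) / 2) = g y (2*i)" for i
  proof -
    have e: "{i*2..<i*2+2} = {2*i, 2*i+1}" by auto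
    have m: "g (-y) N = (-1)^N * g y N" for N
      unfolding g_def by (simp add: power_minus[of y] power_add)
    show ?thesis unfolding e by (simp add: m)
  qed
  ultimately show ?thesis unfolding g_def by (simp add: add.commute mult.commute)
qed



definition H :: "nat \<Rightarrow> real \<Rightarrow> real" where
  "H r y = 1/2 * (y^2 * (E (r-1) y / real r + E (r-2) y / real (r-1))) - y * E (r-1) y / real r"

lemma E_alt: "y \<noteq> 1 \<Longrightarrow> E j y = (y/(1-y))^j * (1/(1-y))"
  unfolding E_def by (simp add: power_divide field_simps)

lemma divdiv_cancel: "(c::real) \<noteq> 0 \<Longrightarrow> (a/c)/(b/c) = a/b"
  by (cases "b = 0") (simp_all add: field_simps)

lemma xfacts:
  fixes t :: real
  assumes "t > 1"
  defines "D \<equiv> (t - 1/t)/2" and "L \<equiv> t + 1/t"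
  shows "2*D/L > 0" "2*D/L < 1" "(2*D/L)/(1-2*D/L) = t*D" "1/(1-2*D/L) = t*L/2"
        "(-(2*D/L))/(1-(-(2*D/L))) = -D/t" "1/(1-(-(2*D/L))) = L/(2*t)"
proof -
  have t0: "t > 0" "t \<noteq> 0" using assms by auto
  have L: "L = (t^2+1)/t" unfolding L_def using t0 by (simp add: field_simps power2_eq_square)
  have D: "D = (t^2-1)/(2*t)" unfolding D_def using t0 by (simp add: field_simps power2_eq_square)
  have p: "t^2 > 1" using assms by (simp add: one_less_power)
  have q: "t^2 + 1 > 0" using p by simp
  have "2*D = (t^2-1)/t" unfolding D_def using t0 by (simp add: field_simps power2_eq_square)
  then have "2*D/L = ((t^2-1)/t)/((t^2+1)/t)" unfolding L by simp
  also have "\<dots> = (t^2-1)/(t^2+1)" using t0 by (simp add: divide_divide_times_eq)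
  finally have x: "2*D/L = (t^2-1)/(t^2+1)" .
  show "2*D/L > 0" unfolding x using p q by simp
  show "2*D/L < 1" unfolding x using p q by simp
  have om: "1 - (t^2-1)/(t^2+1) = 2/(t^2+1)" using q by (simp add: field_simps)
  have op: "1 - (-((t^2-1)/(t^2+1))) = 2*t^2/(t^2+1)" using q by (simp add: field_simps)
  have tD: "t*D = (t^2-1)/2" unfolding D using t0 by simp
  have tL: "t*L/2 = (t^2+1)/2" unfolding L using t0 by simp
  have Dt: "-D/t = -((t^2-1)/(2*t^2))" unfolding D_def using t0 by (simp add: field_simps power2_eq_square)
  have Lt: "L/(2*t) = (t^2+1)/(2*t^2)" unfolding L_def using t0 by (simp add: field_simps power2_eq_square)
  show "(2*D/L)/(1-2*D/L) = t*D" unfolding x om tD using q by simp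
  show "1/(1-2*D/L) = t*L/2" unfolding x om tL using q by simp
  have "(-(2*D/L))/(1-(-(2*D/L))) = (-((t^2-1)/(t^2+1)))/(2*t^2/(t^2+1))" unfolding x op ..
  also have "\<dots> = (-(t^2-1)/(t^2+1))/(2*t^2/(t^2+1))" by (simp only: minus_divide_left)
  also have "\<dots> = -(t^2-1)/(2*t^2)" by (rule divdiv_cancel) (use q in simp)
  also have "\<dots> = -((t^2-1)/(2*t^2))" by (simp only: minus_divide_left)
  finally show "(-(2*D/L))/(1-(-(2*D/L))) = -D/t" unfolding Dt .
  show "1/(1-(-(2*D/L))) = L/(2*t)" unfolding x op Lt using q t0 by (simp add: field_simps)
qed

lemma H_gen:
  fixes t D L y :: real
  assumes "t \<noteq> 0" "L \<noteq> 0" "y = 2*D/L" "\<And>j. E j y = (t*D)^j * (t*L/2)" "r \<ge> 2"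
  shows "H r y = D^(r+1)*t^r/(real r*L) + D^r*t^(r-1)/(real (r-1)*L) - D^r*t^r/real r"
proof -
  obtain s where r: "r = s + 2" using assms(5) by (metis le_add_diff_inverse2)
  have "H r y = 1/2 * ((2*D/L)^2 * ((t*D)^(s+1) * (t*L/2) / real (s+2) + (t*D)^s * (t*L/2) / real (s+1)))
      - (2*D/L) * ((t*D)^(s+1) * (t*L/2)) / real (s+2)"
    unfolding H_def r assms(4) by (simp add: assms(3) add.commute)
  also have "\<dots> = D^(s+3)*t^(s+2)/(real (s+2)*L) + D^(s+2)*t^(s+1)/(real (s+1)*L) - D^(s+2)*t^(s+2)/real (s+2)"
  proof -
    have key: "1/2 * ((2*D/L)^2 * ((t*D)^(s+1) * (t*L/2) / b + (t*D)^s * (t*L/2) / a))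
      - (2*D/L) * ((t*D)^(s+1) * (t*L/2)) / b = D^(s+3)*t^(s+2)/(b*L) + D^(s+2)*t^(s+1)/(a*L) - D^(s+2)*t^(s+2)/b"
      if "a \<noteq> 0" "b \<noteq> 0" for a b :: real
      using that assms(1,2) by (simp add: power_mult_distrib power_add power2_eq_square power3_eq_cube field_simps)
    show ?thesis by (rule key) simp_all
  qed
  finally show ?thesis unfolding r by (simp add: numeral_3_eq_3 numeral_2_eq_2 add.commute)
qed

lemma G_H: "G r y = H r y + 1/2 * Pc r y"
  unfolding G_def H_def by simp

lemma lin_aux: "(x::real) \<noteq> 0 \<Longrightarrow> c*a/x + 1/x*u1 + (c*b/(-x) + 1/(-x)*u2) = c*(a-b)/x + 1/x*(u1-u2)"
  by (simp add: field_simps)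

lemma Pc_pair:
  assumes "x \<noteq> 0"
  shows "Pc r x + Pc r (-x) = (-1)^(r+1) * (ln (1-x) - ln (1+x)) / x
     + (1/x) * (\<Sum>j=1..r. (-1)^(r-j) / real j * ((x/(1-x))^j - ((-x)/(1-(-x)))^j))"
proof -
  define S1 where "S1 = (\<Sum>j=1..r. (-1)^(r-j) / real j * (x/(1-x))^j)"
  define S2 where "S2 = (\<Sum>j=1..r. (-1)^(r-j) / real j * ((-x)/(1-(-x)))^j)"
  have d: "(\<Sum>j=1..r. (-1)^(r-j) / real j * ((x/(1-x))^j - ((-x)/(1-(-x)))^j)) = S1 - S2"
    unfolding S1_def S2_def by (simp add: sum_subtractf[symmetric] right_diff_distrib)
  have p1: "Pc r x = (-1)^(r+1)*ln(1-x)/x + (1/x)*S1" unfolding Pc_def S1_def by (rule refl)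
  have p2: "Pc r (-x) = (-1)^(r+1)*ln(1+x)/(-x) + (1/(-x))*S2" unfolding Pc_def S2_def by simp
  show ?thesis unfolding d p1 p2 by (rule lin_aux[OF assms])
qed

lemma split_even: fixes g :: "nat \<Rightarrow> real" shows "(\<Sum>j=1..2*m. g j) = (\<Sum>i<m. g (2*i+1) + g (2*i+2))"
proof (induction m)
  case 0 then show ?case by simp
next
  case (Suc m)
  have "{1..2*Suc m} = insert (2*m+2) (insert (2*m+1) {1..2*m})" by auto
  then have "(\<Sum>j=1..2*Suc m. g j) = g (2*m+2) + (g (2*m+1) + (\<Sum>j=1..2*m. g j))" by simp
  then show ?case using Suc.IH by simp
qed

lemma split_odd: fixes g :: "nat \<Rightarrow> real" and m :: nat shows "(\<Sum>j=1..2*m+1. g j) = (\<Sum>i\<le>m. g (2*i+1)) + (\<Sum>i<m. g (2*i+2))"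
proof -
  have "{1..2*m+1} = insert (2*m+1) {1..2*m}" by auto
  then have "(\<Sum>j=1..2*m+1. g j) = g (2*m+1) + (\<Sum>j=1..2*m. g j)" by simp
  also have "\<dots> = g (2*m+1) + (\<Sum>i<m. g (2*i+1)) + (\<Sum>i<m. g (2*i+2))"
    unfolding split_even by (simp add: sum.distrib)
  finally show ?thesis by (simp add: lessThan_Suc_atMost[symmetric])
qed

lemma rev0: fixes f :: "nat \<Rightarrow> real" shows "m > 0 \<Longrightarrow> (\<Sum>j=0..m-1. f j) = (\<Sum>i<m. f (m-1-i))"
  using sum.atLeastAtMost_rev[of f 0 "m-1"] by (simp add: atLeast0AtMost lessThan_Suc_atMost[symmetric])

lemma rev1: fixes f :: "nat \<Rightarrow> real" shows "(\<Sum>j=1..m. f j) = (\<Sum>i<m. f (m-i))"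
  by (rule sum.reindex_bij_witness[where i="\<lambda>i. m - i" and j="\<lambda>j. m - j"]) (auto simp: Suc_le_eq)

lemma revm: fixes f :: "nat \<Rightarrow> real" shows "(\<Sum>j=0..m. f j) = (\<Sum>i\<le>m. f (m-i))"
  using sum.atLeastAtMost_rev[of f 0 m] by (simp add: atLeast0AtMost)



lemma final_even:
  fixes n m :: nat and t :: real
  assumes t1: "t > 1" and m0: "m > 0"
    and hF: "\<And>k. fibr (n*k) = (t^k - (1/t)^k)/sqrt 5"
    and hL: "\<And>k. lucas (n*k) = t^k + (1/t)^k"
    and hln: "real n * ln alpha = ln t"
  shows "(G (2*m) (sqrt 5 * fibr n / lucas n) + G (2*m) (-(sqrt 5 * fibr n / lucas n))) / 2 =
     ( lucas n / (4 * fibr n) * (\<Sum>j=0..m-1. 5 ^ (m-j) / (2 * real m - 2 * real j)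
            * fibr n ^ (2*m-2*j) / 2 ^ (2*m-2*j) * fibr (n*(2*m-2*j)))
     - lucas n / (4 * fibr n) * (\<Sum>j=1..m. 5 ^ (m-j) / (2 * real m - 2 * real j + 1)
            * fibr n ^ (2*m-2*j+1) / 2 ^ (2*m-2*j+1) * lucas (n*(2*m-2*j+1)))
     - 5 ^ m / real m * fibr n ^ (2*m) / 2 ^ (2*m+2) * lucas (2*n*m)
     + 1 / lucas n * (5 ^ (m+1) / real m) * (fibr n ^ (2*m+1) / 2 ^ (2*m+3)) * fibr (2*n*m)
     + 1 / lucas n * (5 ^ m / (2 * real m - 1)) * (fibr n ^ (2*m) / 2 ^ (2*m+1)) * lucas (n*(2*m-1))
     + real n * lucas n / (2 * fibr n * sqrt 5) * ln alpha)"
proof -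
  define D where "D = (t - 1/t)/2"
  define L where "L = t + 1/t"
  define x where "x = 2*D/L"
  have t0: "t > 0" "t \<noteq> 0" using t1 by auto
  have "1 < t*t" using less_1_mult[OF t1 t1] .
  then have Dpos: "D > 0" unfolding D_def using t1 by (simp add: field_simps)
  have Lpos: "L > 0" unfolding L_def using t0 by (simp add: add_pos_pos)
  have s5: "sqrt 5 > 0" "sqrt 5 * sqrt 5 = 5" by simp_all
  have D2: "t - 1/t = 2*D" unfolding D_def by simp
  have F1: "fibr n = 2*D/sqrt 5" using hF[of 1] D2 by simp
  have L1: "lucas n = L" using hL[of 1] unfolding L_def by simp
  have xx: "sqrt 5 * fibr n / lucas n = x" unfolding F1 L1 x_def using s5 by simp
  note xf = xfacts[OF t1, folded D_def L_def, folded x_def]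
  have x0: "x \<noteq> 0" "x \<noteq> 1" "-x \<noteq> 1" using xf(1,2) by auto
  have pw: "5^j * fibr n^(2*j) / 2^(2*j) = D^(2*j)" for j
  proof -
    have f2: "fibr n ^ 2 = 4 * D^2 / 5" unfolding F1 using s5 by (simp add: power_divide power_mult_distrib)
    have "fibr n^(2*j) = (fibr n ^ 2)^j" by (simp add: power_mult)
    also have "\<dots> = (4 * D^2 / 5)^j" by (simp only: f2)
    also have "\<dots> = 4^j * D^(2*j) / 5^j" by (simp add: power_mult power_divide power_mult_distrib)
    finally have "fibr n^(2*j) = 4^j * D^(2*j) / 5^j" .
    moreover have "(2::real)^(2*j) = 4^j" by (simp add: power_mult)
    ultimately show ?thesis by simp
  qed
  have rearr: "a/b*c/d*e = (a*c/d)*e/b" for a b c d e :: real by simp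
  have hE1: "E j x = (t*D)^j*(t*L/2)" for j using E_alt[OF x0(2)] xf(3,4) by simp
  have hE2: "E j (-x) = ((1/t)*(-D))^j*((1/t)*L/2)" for j
  proof -
    have "E j (-x) = (-x/(1-(-x)))^j*(1/(1-(-x)))" using E_alt[OF x0(3)] by simp
    also have "\<dots> = (-D/t)^j*(L/(2*t))" by (simp only: xf(5,6))
    finally show ?thesis by simp
  qed
  have m2: "2*m \<ge> 2" using m0 by simp
  have Hx: "H (2*m) x = D^(2*m+1)*t^(2*m)/(real (2*m)*L) + D^(2*m)*t^(2*m-1)/(real (2*m-1)*L) - D^(2*m)*t^(2*m)/real (2*m)"
    by (rule H_gen[OF _ _ x_def hE1 m2]) (use t0 Lpos in auto)
  have Hmx: "H (2*m) (-x) = (-D)^(2*m+1)*(1/t)^(2*m)/(real (2*m)*L) + (-D)^(2*m)*(1/t)^(2*m-1)/(real (2*m-1)*L) - (-D)^(2*m)*(1/t)^(2*m)/real (2*m)"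
    by (rule H_gen[OF _ _ _ hE2 m2]) (use t0 Lpos in \<open>auto simp: x_def\<close>)
  define A where "A = D^(2*m)"
  define T1 where "T1 = 5 ^ m / real m * fibr n ^ (2*m) / 2 ^ (2*m+2) * lucas (2*n*m)"
  define T2 where "T2 = 1 / lucas n * (5 ^ (m+1) / real m) * (fibr n ^ (2*m+1) / 2 ^ (2*m+3)) * fibr (2*n*m)"
  define T3 where "T3 = 1 / lucas n * (5 ^ m / (2 * real m - 1)) * (fibr n ^ (2*m) / 2 ^ (2*m+1)) * lucas (n*(2*m-1))"
  have T1v: "T1 = A*(t^(2*m) + (1/t)^(2*m))/(4*real m)"
  proof -
    have "T1 = (5^m * fibr n^(2*m) / 2^(2*m)) * lucas (n*(2*m)) / (4*real m)"
      unfolding T1_def by (simp add: power_add mult_ac)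
    then show ?thesis unfolding pw A_def hL by simp
  qed
  have T2v: "T2 = A*D*(t^(2*m) - (1/t)^(2*m))/(4*real m*L)"
  proof -
    have X: "(5 * fibr n / 8) * fibr (n*(2*m)) = D*(t^(2*m) - (1/t)^(2*m))/4"
      unfolding F1 hF using s5 by (simp add: field_simps)
    have "T2 = (5^m * fibr n^(2*m) / 2^(2*m)) * ((5 * fibr n / 8) * fibr (n*(2*m))) / (L*real m)"
      unfolding T2_def L1 by (simp add: power_add mult_ac)
    then show ?thesis unfolding pw A_def X using Lpos by (simp add: field_simps)
  qed
  have T3v: "T3 = A*(t^(2*m-1) + (1/t)^(2*m-1))/(2*(2*real m - 1)*L)"
  proof -
    have "T3 = (5^m * fibr n^(2*m) / 2^(2*m)) * lucas (n*(2*m-1)) / (2*(2*real m - 1)*L)"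
      unfolding T3_def L1 by (simp add: power_add mult_ac)
    then show ?thesis unfolding pw A_def hL by simp
  qed
  have Bnd: "(H (2*m) x + H (2*m) (-x))/2 = - T1 + T2 + T3"
  proof -
    have e: "(-D)^(2*m+1) = -(A*D)" "(-D)^(2*m) = A" "D^(2*m+1) = A*D" "D^(2*m) = A"
      unfolding A_def by (simp_all add: power_add)
    have r: "real (2*m) = 2*real m" "real (2*m-1) = 2*real m - 1" using m0 by (simp_all add: of_nat_diff)
    have M: "real m \<noteq> 0" "2*real m - 1 \<noteq> 0" using m0 by simp_all
    have lin: "(A*D*a/(2*M*L) + A*b/(N*L) - A*a/(2*M) + (-(A*D)*c/(2*M*L) + A*d/(N*L) - A*c/(2*M)))/2
       = - (A*(a+c)/(4*M)) + A*D*(a-c)/(4*M*L) + A*(b+d)/(2*N*L)" if "M \<noteq> 0" "N \<noteq> 0" for a b c d M N :: real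
      using that Lpos by (simp add: field_simps)
    show ?thesis unfolding Hx Hmx e r T1v T2v T3v using lin[OF M] by simp
  qed
  define S1 where "S1 = (\<Sum>j=0..m-1. 5 ^ (m-j) / (2 * real m - 2 * real j)
            * fibr n ^ (2*m-2*j) / 2 ^ (2*m-2*j) * fibr (n*(2*m-2*j)))"
  define S2 where "S2 = (\<Sum>j=1..m. 5 ^ (m-j) / (2 * real m - 2 * real j + 1)
            * fibr n ^ (2*m-2*j+1) / 2 ^ (2*m-2*j+1) * lucas (n*(2*m-2*j+1)))"
  have S1v: "S1 = (\<Sum>i<m. D^(2*i+2)*(t^(2*i+2) - (1/t)^(2*i+2))/sqrt 5/(2*real i+2))"
    unfolding S1_def rev0[OF m0]
  proof (rule sum.cong[OF refl])
    fix i assume "i \<in> {..<m}"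
    then have i: "i < m" by simp
    have e1: "m-(m-1-i) = i+1" "2*m-2*(m-1-i) = 2*(i+1)" using i by auto
    have e2: "2*real m - 2*real (m-1-i) = 2*real i + 2" using i by (simp add: of_nat_diff)
    show "5 ^ (m-(m-1-i)) / (2 * real m - 2 * real (m-1-i)) * fibr n ^ (2*m-2*(m-1-i)) / 2 ^ (2*m-2*(m-1-i)) * fibr (n*(2*m-2*(m-1-i)))
       = D^(2*i+2)*(t^(2*i+2) - (1/t)^(2*i+2))/sqrt 5/(2*real i+2)"
      unfolding e1 e2 rearr pw hF by (simp add: mult_ac)
  qed
  have S2v: "S2 = (\<Sum>i<m. D^(2*i+1)*(t^(2*i+1) + (1/t)^(2*i+1))/sqrt 5/(2*real i+1))"
    unfolding S2_def rev1
  proof (rule sum.cong[OF refl])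
    fix i assume "i \<in> {..<m}"
    then have i: "i < m" by simp
    have e1: "m-(m-i) = i" "2*m-2*(m-i)+1 = 2*i+1" using i by auto
    have e2: "2*real m - 2*real (m-i) + 1 = 2*real i + 1" using i by (simp add: of_nat_diff)
    have e3: "5^i * fibr n^(2*i+1) / 2^(2*i+1) = D^(2*i+1)/sqrt 5"
    proof -
      have "5^i * fibr n^(2*i+1) / 2^(2*i+1) = (5^i * fibr n^(2*i) / 2^(2*i)) * (fibr n / 2)" by (simp add: mult_ac)
      also have "\<dots> = D^(2*i) * (D / sqrt 5)" unfolding pw by (simp add: F1)
      finally show ?thesis by simp
    qed
    show "5 ^ (m-(m-i)) / (2 * real m - 2 * real (m-i) + 1) * fibr n ^ (2*m-2*(m-i)+1) / 2 ^ (2*m-2*(m-i)+1) * lucas (n*(2*m-2*(m-i)+1))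
       = D^(2*i+1)*(t^(2*i+1) + (1/t)^(2*i+1))/sqrt 5/(2*real i+1)"
      unfolding e1 e2 rearr e3 hL by (simp add: mult_ac)
  qed
  have neg: "(-D/t)^k = (-1)^k*(D^k*(1/t)^k)" for k
  proof -
    have "-D/t = (-1)*(D*(1/t))" by simp
    then show ?thesis by (simp only: power_mult_distrib)
  qed
  have Sg: "(\<Sum>j=1..2*m. (-1)^(2*m-j) / real j * ((t*D)^j - (-D/t)^j)) = sqrt 5 * (S1 - S2)"
  proof -
    have "(\<Sum>j=1..2*m. (-1)^(2*m-j) / real j * ((t*D)^j - (-D/t)^j))
        = (\<Sum>i<m. (- (D^(2*i+1)*(t^(2*i+1) + (1/t)^(2*i+1))/(2*real i+1))) + D^(2*i+2)*(t^(2*i+2) - (1/t)^(2*i+2))/(2*real i+2))"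
      unfolding split_even
    proof (rule sum.cong[OF refl])
      fix i assume "i \<in> {..<m}"
      then have i: "i < m" by simp
      have o1: "2*m-(2*i+1) = Suc (2*(m-i-1))" "2*m-(2*i+2) = 2*(m-i-1)" using i by auto
      show "(-1)^(2*m-(2*i+1)) / real (2*i+1) * ((t*D)^(2*i+1) - (-D/t)^(2*i+1))
          + (-1)^(2*m-(2*i+2)) / real (2*i+2) * ((t*D)^(2*i+2) - (-D/t)^(2*i+2))
          = (- (D^(2*i+1)*(t^(2*i+1) + (1/t)^(2*i+1))/(2*real i+1))) + D^(2*i+2)*(t^(2*i+2) - (1/t)^(2*i+2))/(2*real i+2)"
        unfolding o1 neg by (simp add: power_mult_distrib field_simps)
    qed
    also have "\<dots> = sqrt 5 * (S1 - S2)"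
    proof -
      have tw: "- (Y/d) + X/c = sqrt 5 * (X/sqrt 5/c - Y/sqrt 5/d)" for X Y c d :: real
        using s5 by (simp add: field_simps)
      show ?thesis unfolding S1v S2v sum_subtractf[symmetric] sum_distrib_left by (rule sum.cong[OF refl]) (rule tw)
    qed
    finally show ?thesis .
  qed
  have Pcp: "Pc (2*m) x + Pc (2*m) (-x) = (-1)^(2*m+1) * (ln (1-x) - ln (1+x)) / x
     + (1/x) * (\<Sum>j=1..2*m. (-1)^(2*m-j) / real j * ((t*D)^j - (-D/t)^j))"
    using Pc_pair[OF x0(1), of "2*m"] unfolding xf(3) xf(5) .
  have lnv: "ln (1-x) - ln (1+x) = - 2 * ln t"
  proof -
    have a: "1 - x = 2/(t*L)" using xf(4) x0 t0 Lpos by (simp add: field_simps)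
    have b: "1 + x = 2*t/L" using xf(6) x0 t0 Lpos by (simp add: field_simps)
    have "ln (2/(t*L)) = ln 2 - ln t - ln L" using t0 Lpos by (simp add: ln_div ln_mult)
    moreover have "ln (2*t/L) = ln 2 + ln t - ln L" using t0 Lpos by (simp add: ln_div ln_mult)
    ultimately show ?thesis unfolding a b by simp
  qed
  have LHS: "(G (2*m) x + G (2*m) (-x)) / 2 = (H (2*m) x + H (2*m) (-x))/2 + (Pc (2*m) x + Pc (2*m) (-x))/4"
    unfolding G_H by (simp add: field_simps)
  have fin: "(- T1 + T2 + T3) + ((-1) * (- 2 * ln t) / x + (1/x) * (sqrt 5 * (S1 - S2)))/4
     = lucas n / (4 * fibr n) * S1 - lucas n / (4 * fibr n) * S2 - T1 + T2 + T3
       + real n * lucas n / (2 * fibr n * sqrt 5) * ln alpha"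
  proof -
    have "real n * lucas n / (2 * fibr n * sqrt 5) * ln alpha = lucas n / (2 * fibr n * sqrt 5) * ln t"
      using hln by (simp add: field_simps)
    then show ?thesis unfolding x_def F1 L1 using s5 Dpos Lpos by (simp add: field_simps)
  qed
  show ?thesis unfolding xx LHS Bnd Pcp Sg lnv using fin
    unfolding S1_def S2_def T1_def T2_def T3_def by simp
qed

lemma final_odd:
  fixes n m :: nat and t :: real
  assumes t1: "t > 1" and m0: "m > 0"
    and hF: "\<And>k. fibr (n*k) = (t^k - (1/t)^k)/sqrt 5"
    and hL: "\<And>k. lucas (n*k) = t^k + (1/t)^k"
    and hln: "real n * ln alpha = ln t"
  shows "(G (2*m+1) (sqrt 5 * fibr n / lucas n) + G (2*m+1) (-(sqrt 5 * fibr n / lucas n))) / 2 =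
     ( lucas n / (4 * fibr n) * (\<Sum>j=0..m. 5 ^ (m-j) / (2 * real m - 2 * real j + 1)
            * fibr n ^ (2*m-2*j+1) / 2 ^ (2*m-2*j+1) * lucas (n*(2*m-2*j+1)))
     - lucas n / (4 * fibr n) * (\<Sum>j=1..m. 5 ^ (m-j+1) / (2 * real m - 2 * real j + 2)
            * fibr n ^ (2*m-2*j+2) / 2 ^ (2*m-2*j+2) * fibr (n*(2*m-2*j+2)))
     - 5 ^ (m+1) / (2 * real m + 1) * fibr n ^ (2*m+1) / 2 ^ (2*m+2) * fibr (n*(2*m+1))
     + 1 / lucas n * (5 ^ (m+1) / (2 * real m + 1)) * (fibr n ^ (2*m+2) / 2 ^ (2*m+3)) * lucas (n*(2*m+1))
     + 1 / lucas n * (5 ^ (m+1) / real m) * (fibr n ^ (2*m+1) / 2 ^ (2*m+3)) * fibr (2*m*n)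
     - real n * lucas n / (2 * fibr n * sqrt 5) * ln alpha)"
proof -
  define D where "D = (t - 1/t)/2"
  define L where "L = t + 1/t"
  define x where "x = 2*D/L"
  have t0: "t > 0" "t \<noteq> 0" using t1 by auto
  have "1 < t*t" using less_1_mult[OF t1 t1] .
  then have Dpos: "D > 0" unfolding D_def using t1 by (simp add: field_simps)
  have Lpos: "L > 0" unfolding L_def using t0 by (simp add: add_pos_pos)
  have s5: "sqrt 5 > 0" "sqrt 5 * sqrt 5 = 5" by simp_all
  have D2: "t - 1/t = 2*D" unfolding D_def by simp
  have F1: "fibr n = 2*D/sqrt 5" using hF[of 1] D2 by simp
  have L1: "lucas n = L" using hL[of 1] unfolding L_def by simp
  have xx: "sqrt 5 * fibr n / lucas n = x" unfolding F1 L1 x_def using s5 by simp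
  note xf = xfacts[OF t1, folded D_def L_def, folded x_def]
  have x0: "x \<noteq> 0" "x \<noteq> 1" "-x \<noteq> 1" using xf(1,2) by auto
  have pw: "5^j * fibr n^(2*j) / 2^(2*j) = D^(2*j)" for j
  proof -
    have f2: "fibr n ^ 2 = 4 * D^2 / 5" unfolding F1 using s5 by (simp add: power_divide power_mult_distrib)
    have "fibr n^(2*j) = (fibr n ^ 2)^j" by (simp add: power_mult)
    also have "\<dots> = (4 * D^2 / 5)^j" by (simp only: f2)
    also have "\<dots> = 4^j * D^(2*j) / 5^j" by (simp add: power_mult power_divide power_mult_distrib)
    finally have "fibr n^(2*j) = 4^j * D^(2*j) / 5^j" .
    moreover have "(2::real)^(2*j) = 4^j" by (simp add: power_mult)
    ultimately show ?thesis by simp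
  qed
  have rearr: "a/b*c/d*e = (a*c/d)*e/b" for a b c d e :: real by simp
  have hE1: "E j x = (t*D)^j*(t*L/2)" for j using E_alt[OF x0(2)] xf(3,4) by simp
  have hE2: "E j (-x) = ((1/t)*(-D))^j*((1/t)*L/2)" for j
  proof -
    have "E j (-x) = (-x/(1-(-x)))^j*(1/(1-(-x)))" using E_alt[OF x0(3)] by simp
    also have "\<dots> = (-D/t)^j*(L/(2*t))" by (simp only: xf(5,6))
    finally show ?thesis by simp
  qed
  have m2: "2*m+1 \<ge> 2" using m0 by simp
  have Hx: "H (2*m+1) x = D^(2*m+1+1)*t^(2*m+1)/(real (2*m+1)*L) + D^(2*m+1)*t^(2*m+1-1)/(real (2*m+1-1)*L) - D^(2*m+1)*t^(2*m+1)/real (2*m+1)"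
    by (rule H_gen[OF _ _ x_def hE1 m2]) (use t0 Lpos in auto)
  have Hmx: "H (2*m+1) (-x) = (-D)^(2*m+1+1)*(1/t)^(2*m+1)/(real (2*m+1)*L) + (-D)^(2*m+1)*(1/t)^(2*m+1-1)/(real (2*m+1-1)*L) - (-D)^(2*m+1)*(1/t)^(2*m+1)/real (2*m+1)"
    by (rule H_gen[OF _ _ _ hE2 m2]) (use t0 Lpos in \<open>auto simp: x_def\<close>)
  define A where "A = D^(2*m)"
  define T1 where "T1 = 5 ^ (m+1) / (2 * real m + 1) * fibr n ^ (2*m+1) / 2 ^ (2*m+2) * fibr (n*(2*m+1))"
  define T2 where "T2 = 1 / lucas n * (5 ^ (m+1) / (2 * real m + 1)) * (fibr n ^ (2*m+2) / 2 ^ (2*m+3)) * lucas (n*(2*m+1))"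
  define T3 where "T3 = 1 / lucas n * (5 ^ (m+1) / real m) * (fibr n ^ (2*m+1) / 2 ^ (2*m+3)) * fibr (2*m*n)"
  have T1v: "T1 = A*D*(t^(2*m+1) - (1/t)^(2*m+1))/(2*(2*real m+1))"
  proof -
    have X: "(5 * fibr n / 4) * fibr (n*(2*m+1)) = D*(t^(2*m+1) - (1/t)^(2*m+1))/2"
      unfolding F1 hF using s5 by (simp add: field_simps)
    have "T1 = (5^m * fibr n^(2*m) / 2^(2*m)) * ((5 * fibr n / 4) * fibr (n*(2*m+1))) / (2*real m+1)"
      unfolding T1_def by (simp add: power_add mult_ac)
    then show ?thesis unfolding pw A_def X by (simp add: field_simps)
  qed
  have T2v: "T2 = A*D*D*(t^(2*m+1) + (1/t)^(2*m+1))/(2*(2*real m+1)*L)"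
  proof -
    have "T2 = (5^(m+1) * fibr n^(2*(m+1)) / 2^(2*(m+1))) * lucas (n*(2*m+1)) / (2*(2*real m+1)*L)"
      unfolding T2_def L1 by (simp add: power_add mult_ac)
    then show ?thesis unfolding pw A_def hL by (simp add: power_add mult_ac)
  qed
  have T3v: "T3 = A*D*(t^(2*m) - (1/t)^(2*m))/(4*real m*L)"
  proof -
    have X: "(5 * fibr n / 8) * fibr (n*(2*m)) = D*(t^(2*m) - (1/t)^(2*m))/4"
      unfolding F1 hF using s5 by (simp add: field_simps)
    have "T3 = (5^m * fibr n^(2*m) / 2^(2*m)) * ((5 * fibr n / 8) * fibr (n*(2*m))) / (L*real m)"
      unfolding T3_def L1 by (simp add: power_add mult_ac)
    then show ?thesis unfolding pw A_def X using Lpos by (simp add: field_simps)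
  qed
  have Bnd: "(H (2*m+1) x + H (2*m+1) (-x))/2 = - T1 + T2 + T3"
  proof -
    have e: "(-D)^(2*m+1+1) = A*D*D" "(-D)^(2*m+1) = -(A*D)" "D^(2*m+1+1) = A*D*D" "D^(2*m+1) = A*D" "2*m+1-1 = 2*m"
      unfolding A_def by (simp_all add: power_add)
    have r: "real (2*m+1) = 2*real m+1" "real (2*m) = 2*real m" by simp_all
    have M: "real m \<noteq> 0" "2*real m + 1 \<noteq> 0" using m0 by simp_all
    have lin: "(A*D*D*a/(N*L) + A*D*b/(2*M*L) - A*D*a/N + (A*D*D*c/(N*L) + (-(A*D))*d/(2*M*L) - (-(A*D))*c/N))/2
       = - (A*D*(a-c)/(2*N)) + A*D*D*(a+c)/(2*N*L) + A*D*(b-d)/(4*M*L)" if "M \<noteq> 0" "N \<noteq> 0" for a b c d M N :: real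
      using that Lpos by (simp add: field_simps)
    show ?thesis unfolding Hx Hmx e r T1v T2v T3v by (rule lin[OF M])
  qed
  define S1 where "S1 = (\<Sum>j=0..m. 5 ^ (m-j) / (2 * real m - 2 * real j + 1)
            * fibr n ^ (2*m-2*j+1) / 2 ^ (2*m-2*j+1) * lucas (n*(2*m-2*j+1)))"
  define S2 where "S2 = (\<Sum>j=1..m. 5 ^ (m-j+1) / (2 * real m - 2 * real j + 2)
            * fibr n ^ (2*m-2*j+2) / 2 ^ (2*m-2*j+2) * fibr (n*(2*m-2*j+2)))"
  have S2v: "S2 = (\<Sum>i<m. D^(2*i+2)*(t^(2*i+2) - (1/t)^(2*i+2))/sqrt 5/(2*real i+2))"
    unfolding S2_def rev1
  proof (rule sum.cong[OF refl])
    fix i assume "i \<in> {..<m}"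
    then have i: "i < m" by simp
    have e1: "m-(m-i)+1 = i+1" "2*m-2*(m-i)+2 = 2*(i+1)" using i by auto
    have e2: "2*real m - 2*real (m-i) + 2 = 2*real i + 2" using i by (simp add: of_nat_diff)
    show "5 ^ (m-(m-i)+1) / (2 * real m - 2 * real (m-i) + 2) * fibr n ^ (2*m-2*(m-i)+2) / 2 ^ (2*m-2*(m-i)+2) * fibr (n*(2*m-2*(m-i)+2))
       = D^(2*i+2)*(t^(2*i+2) - (1/t)^(2*i+2))/sqrt 5/(2*real i+2)"
      unfolding e1 e2 rearr pw hF by (simp add: mult_ac)
  qed
  have S1v: "S1 = (\<Sum>i\<le>m. D^(2*i+1)*(t^(2*i+1) + (1/t)^(2*i+1))/sqrt 5/(2*real i+1))"
    unfolding S1_def revm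
  proof (rule sum.cong[OF refl])
    fix i assume "i \<in> {..m}"
    then have i: "i \<le> m" by simp
    have e1: "m-(m-i) = i" "2*m-2*(m-i)+1 = 2*i+1" using i by auto
    have e2: "2*real m - 2*real (m-i) + 1 = 2*real i + 1" using i by (simp add: of_nat_diff)
    have e3: "5^i * fibr n^(2*i+1) / 2^(2*i+1) = D^(2*i+1)/sqrt 5"
    proof -
      have "5^i * fibr n^(2*i+1) / 2^(2*i+1) = (5^i * fibr n^(2*i) / 2^(2*i)) * (fibr n / 2)" by (simp add: mult_ac)
      also have "\<dots> = D^(2*i) * (D / sqrt 5)" unfolding pw by (simp add: F1)
      finally show ?thesis by simp
    qed
    show "5 ^ (m-(m-i)) / (2 * real m - 2 * real (m-i) + 1) * fibr n ^ (2*m-2*(m-i)+1) / 2 ^ (2*m-2*(m-i)+1) * lucas (n*(2*m-2*(m-i)+1))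
       = D^(2*i+1)*(t^(2*i+1) + (1/t)^(2*i+1))/sqrt 5/(2*real i+1)"
      unfolding e1 e2 rearr e3 hL by (simp add: mult_ac)
  qed
  have neg: "(-D/t)^k = (-1)^k*(D^k*(1/t)^k)" for k
  proof -
    have "-D/t = (-1)*(D*(1/t))" by simp
    then show ?thesis by (simp only: power_mult_distrib)
  qed
  have Sg: "(\<Sum>j=1..2*m+1. (-1)^(2*m+1-j) / real j * ((t*D)^j - (-D/t)^j)) = sqrt 5 * (S1 - S2)"
  proof -
    have "(\<Sum>j=1..2*m+1. (-1)^(2*m+1-j) / real j * ((t*D)^j - (-D/t)^j))
        = (\<Sum>i\<le>m. D^(2*i+1)*(t^(2*i+1) + (1/t)^(2*i+1))/(2*real i+1)) + (\<Sum>i<m. - (D^(2*i+2)*(t^(2*i+2) - (1/t)^(2*i+2))/(2*real i+2)))"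
      unfolding split_odd
    proof (rule arg_cong2[where f="(+)"])
      show "(\<Sum>i\<le>m. (-1)^(2*m+1-(2*i+1)) / real (2*i+1) * ((t*D)^(2*i+1) - (-D/t)^(2*i+1)))
          = (\<Sum>i\<le>m. D^(2*i+1)*(t^(2*i+1) + (1/t)^(2*i+1))/(2*real i+1))"
      proof (rule sum.cong[OF refl])
        fix i assume "i \<in> {..m}"
        then have i: "i \<le> m" by simp
        have o1: "2*m+1-(2*i+1) = 2*(m-i)" using i by auto
        show "(-1)^(2*m+1-(2*i+1)) / real (2*i+1) * ((t*D)^(2*i+1) - (-D/t)^(2*i+1))
          = D^(2*i+1)*(t^(2*i+1) + (1/t)^(2*i+1))/(2*real i+1)"
          unfolding o1 neg by (simp add: power_mult_distrib field_simps)
      qed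
      show "(\<Sum>i<m. (-1)^(2*m+1-(2*i+2)) / real (2*i+2) * ((t*D)^(2*i+2) - (-D/t)^(2*i+2)))
          = (\<Sum>i<m. - (D^(2*i+2)*(t^(2*i+2) - (1/t)^(2*i+2))/(2*real i+2)))"
      proof (rule sum.cong[OF refl])
        fix i assume "i \<in> {..<m}"
        then have i: "i < m" by simp
        have o1: "2*m+1-(2*i+2) = Suc (2*(m-i-1))" using i by auto
        show "(-1)^(2*m+1-(2*i+2)) / real (2*i+2) * ((t*D)^(2*i+2) - (-D/t)^(2*i+2))
          = - (D^(2*i+2)*(t^(2*i+2) - (1/t)^(2*i+2))/(2*real i+2))"
          unfolding o1 neg by (simp add: power_mult_distrib field_simps)
      qed
    qed
    also have "\<dots> = sqrt 5 * (S1 - S2)"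
    proof -
      have dd: "X/sqrt 5/c = (X/c)/sqrt 5" for X c :: real by simp
      have S1': "S1 = (\<Sum>i\<le>m. D^(2*i+1)*(t^(2*i+1) + (1/t)^(2*i+1))/(2*real i+1)) / sqrt 5"
        unfolding S1v dd sum_divide_distrib ..
      have S2': "S2 = (\<Sum>i<m. D^(2*i+2)*(t^(2*i+2) - (1/t)^(2*i+2))/(2*real i+2)) / sqrt 5"
        unfolding S2v dd sum_divide_distrib ..
      show ?thesis unfolding S1' S2' sum_negf using s5 by (simp add: right_diff_distrib)
    qed
    finally show ?thesis .
  qed
  have Pcp: "Pc (2*m+1) x + Pc (2*m+1) (-x) = (-1)^(2*m+1+1) * (ln (1-x) - ln (1+x)) / x
     + (1/x) * (\<Sum>j=1..2*m+1. (-1)^(2*m+1-j) / real j * ((t*D)^j - (-D/t)^j))"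
    using Pc_pair[OF x0(1), of "2*m+1"] unfolding xf(3) xf(5) .
  have lnv: "ln (1-x) - ln (1+x) = - 2 * ln t"
  proof -
    have a: "1 - x = 2/(t*L)" using xf(4) x0 t0 Lpos by (simp add: field_simps)
    have b: "1 + x = 2*t/L" using xf(6) x0 t0 Lpos by (simp add: field_simps)
    have "ln (2/(t*L)) = ln 2 - ln t - ln L" using t0 Lpos by (simp add: ln_div ln_mult)
    moreover have "ln (2*t/L) = ln 2 + ln t - ln L" using t0 Lpos by (simp add: ln_div ln_mult)
    ultimately show ?thesis unfolding a b by simp
  qed
  have LHS: "(G (2*m+1) x + G (2*m+1) (-x)) / 2 = (H (2*m+1) x + H (2*m+1) (-x))/2 + (Pc (2*m+1) x + Pc (2*m+1) (-x))/4"
    unfolding G_H by (simp add: field_simps)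
  have fin: "(- T1 + T2 + T3) + (1 * (- 2 * ln t) / x + (1/x) * (sqrt 5 * (S1 - S2)))/4
     = lucas n / (4 * fibr n) * S1 - lucas n / (4 * fibr n) * S2 - T1 + T2 + T3
       - real n * lucas n / (2 * fibr n * sqrt 5) * ln alpha"
  proof -
    have "real n * lucas n / (2 * fibr n * sqrt 5) * ln alpha = lucas n / (2 * fibr n * sqrt 5) * ln t"
      using hln by (simp add: field_simps)
    then show ?thesis unfolding x_def F1 L1 using s5 Dpos Lpos by (simp add: field_simps)
  qed
  show ?thesis unfolding xx LHS Bnd Pcp Sg lnv using fin
    unfolding S1_def S2_def T1_def T2_def T3_def by simp
qed



lemma term_eq:
  fixes F Lc :: real
  shows "(let k = Suc i in F ^ (2*k) * 5 ^ k * real ((2*k) choose r)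
        / (Lc ^ (2*k) * (2 * real k - 1) * (2 * real k) * (2 * real k + 1)))
    = real ((2*i+2) choose r) * (sqrt 5 * F / Lc)^(2*i+2) / (real (2*i+1) * real (2*i+2) * real (2*i+3))"
proof -
  have s: "sqrt 5 ^ (2*i+2) = 5^(Suc i)"
    by (simp add: power_add power_mult)
  have "(sqrt 5 * F / Lc)^(2*i+2) = sqrt 5 ^ (2*i+2) * F^(2*i+2) / Lc^(2*i+2)"
    by (simp only: power_mult_distrib power_divide)
  then have "(sqrt 5 * F / Lc)^(2*i+2) = 5^(Suc i) * F^(2*i+2) / Lc^(2*i+2)"
    by (simp only: s)
  moreover have "2 * Suc i = 2*i+2" by simp
  moreover have "(2 * real (Suc i) - 1) * (2 * real (Suc i)) * (2 * real (Suc i) + 1) = real (2*i+1) * real (2*i+2) * real (2*i+3)"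
    by (simp add: algebra_simps)
  ultimately show ?thesis unfolding Let_def by (simp only: mult.assoc divide_divide_eq_left) (simp add: mult_ac)
qed

lemma setup_t:
  fixes n :: nat
  assumes "n > 0" "even n"
  shows "alpha ^ n > 1" "\<And>k. fibr (n*k) = ((alpha^n)^k - (1/alpha^n)^k)/sqrt 5"
    "\<And>k. lucas (n*k) = (alpha^n)^k + (1/alpha^n)^k" "real n * ln alpha = ln (alpha^n)"
proof -
  have a1: "alpha > 1" unfolding alpha_def
  proof -
    have "sqrt 5 > 1" by simp
    then show "(1 + sqrt 5)/2 > 1" by simp
  qed
  have ab: "alpha - beta = sqrt 5" unfolding alpha_def beta_def by (simp add: field_simps)
  have prod: "alpha * beta = -1" unfolding alpha_def beta_def
    by (simp add: field_simps algebra_simps power2_eq_square[symmetric])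
  then have b: "beta = -1/alpha" using a1 by (simp add: field_simps)
  obtain h where h: "n = 2*h" using assms(2) by blast
  have bn: "beta^n = 1/alpha^n" unfolding b h by (simp add: power_mult power_divide)
  show "alpha ^ n > 1" using a1 assms(1) by (simp add: one_less_power)
  show "fibr (n*k) = ((alpha^n)^k - (1/alpha^n)^k)/sqrt 5" for k
    unfolding fibr_def ab by (simp add: power_mult bn[symmetric])
  show "lucas (n*k) = (alpha^n)^k + (1/alpha^n)^k" for k
    unfolding lucas_def by (simp add: power_mult bn[symmetric])
  show "real n * ln alpha = ln (alpha^n)" using a1 by (simp add: ln_realpow)
qed

theorem theorem18:
  fixes n m :: nat
  assumes "n > 0" and "even n" and "m > 0"
  shows
   "(\<lambda>i. let k = Suc i in
        fibr n ^ (2*k) * 5 ^ k * real ((2*k) choose (2*m))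
        / (lucas n ^ (2*k) * (2 * real k - 1) * (2 * real k) * (2 * real k + 1)))
    sums
     ( lucas n / (4 * fibr n) * (\<Sum>j=0..m-1. 5 ^ (m-j) / (2 * real m - 2 * real j)
            * fibr n ^ (2*m-2*j) / 2 ^ (2*m-2*j) * fibr (n*(2*m-2*j)))
     - lucas n / (4 * fibr n) * (\<Sum>j=1..m. 5 ^ (m-j) / (2 * real m - 2 * real j + 1)
            * fibr n ^ (2*m-2*j+1) / 2 ^ (2*m-2*j+1) * lucas (n*(2*m-2*j+1)))
     - 5 ^ m / real m * fibr n ^ (2*m) / 2 ^ (2*m+2) * lucas (2*n*m)
     + 1 / lucas n * (5 ^ (m+1) / real m) * (fibr n ^ (2*m+1) / 2 ^ (2*m+3)) * fibr (2*n*m)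
     + 1 / lucas n * (5 ^ m / (2 * real m - 1)) * (fibr n ^ (2*m) / 2 ^ (2*m+1)) * lucas (n*(2*m-1))
     + real n * lucas n / (2 * fibr n * sqrt 5) * ln alpha)
  \<and>
   (\<lambda>i. let k = Suc i in
        fibr n ^ (2*k) * 5 ^ k * real ((2*k) choose (2*m+1))
        / (lucas n ^ (2*k) * (2 * real k - 1) * (2 * real k) * (2 * real k + 1)))
    sums
     ( lucas n / (4 * fibr n) * (\<Sum>j=0..m. 5 ^ (m-j) / (2 * real m - 2 * real j + 1)
            * fibr n ^ (2*m-2*j+1) / 2 ^ (2*m-2*j+1) * lucas (n*(2*m-2*j+1)))
     - lucas n / (4 * fibr n) * (\<Sum>j=1..m. 5 ^ (m-j+1) / (2 * real m - 2 * real j + 2)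
            * fibr n ^ (2*m-2*j+2) / 2 ^ (2*m-2*j+2) * fibr (n*(2*m-2*j+2)))
     - 5 ^ (m+1) / (2 * real m + 1) * fibr n ^ (2*m+1) / 2 ^ (2*m+2) * fibr (n*(2*m+1))
     + 1 / lucas n * (5 ^ (m+1) / (2 * real m + 1)) * (fibr n ^ (2*m+2) / 2 ^ (2*m+3)) * lucas (n*(2*m+1))
     + 1 / lucas n * (5 ^ (m+1) / real m) * (fibr n ^ (2*m+1) / 2 ^ (2*m+3)) * fibr (2*m*n)
     - real n * lucas n / (2 * fibr n * sqrt 5) * ln alpha)"
proof -
  define t where "t = alpha ^ n"
  note st = setup_t[OF assms(1,2), folded t_def]
  have t1: "t > 1" using st(1) .
  have F1: "fibr n = (t - 1/t)/sqrt 5" using st(2)[of 1] by simp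
  have L1: "lucas n = t + 1/t" using st(3)[of 1] by simp
  have h2: "2*((t - 1/t)/2) = t - 1/t" by simp
  have xe: "sqrt 5 * fibr n / lucas n = 2*((t - 1/t)/2)/(t + 1/t)" unfolding F1 L1 h2 by simp
  have xb: "sqrt 5 * fibr n / lucas n > 0" "sqrt 5 * fibr n / lucas n < 1"
    unfolding xe using xfacts(1,2)[OF t1] by simp_all
  then have ax: "\<bar>sqrt 5 * fibr n / lucas n\<bar> < 1" "sqrt 5 * fibr n / lucas n \<noteq> 0" by auto
  have r2: "2*m \<ge> 2" "2*m+1 \<ge> 2" using assms(3) by simp_all
  have e1: "(\<lambda>i. let k = Suc i in
        fibr n ^ (2*k) * 5 ^ k * real ((2*k) choose (2*m))
        / (lucas n ^ (2*k) * (2 * real k - 1) * (2 * real k) * (2 * real k + 1))) sums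
      ((G (2*m) (sqrt 5 * fibr n / lucas n) + G (2*m) (-(sqrt 5 * fibr n / lucas n))) / 2)"
    unfolding term_eq by (rule even_sums[OF ax r2(1)])
  have e2: "(\<lambda>i. let k = Suc i in
        fibr n ^ (2*k) * 5 ^ k * real ((2*k) choose (2*m+1))
        / (lucas n ^ (2*k) * (2 * real k - 1) * (2 * real k) * (2 * real k + 1))) sums
      ((G (2*m+1) (sqrt 5 * fibr n / lucas n) + G (2*m+1) (-(sqrt 5 * fibr n / lucas n))) / 2)"
    unfolding term_eq by (rule even_sums[OF ax r2(2)])
  show ?thesis
    using e1 e2 unfolding final_even[OF t1 assms(3) st(2,3,4)] final_odd[OF t1 assms(3) st(2,3,4)]
    by blast
qed


end
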